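(* There is a constant $C_{\rm FQ}>0$ such that, as $n\to\infty$, the proportion of integers $m\in[q_n,q_{n+1})$ satisfying $k_{\max}(m)-k_{\min}(m)\ge C_{\rm FQ}\log(n)$ tends to $1$.
   Context: Given an increasing sequence $\{q_i\}$, a decomposition $m=q_{\ell_1}+\dots+q_{\ell_t}$ with $q_{\ell_1}>\dots>q_{\ell_t}$ is FQ-legal if $|\ell_i-\ell_j|\notin\{0,1,3,4\}$ for $i\neq j$ and $\{1,3\}\not\subset\{\ell_1,\dots,\ell_t\}$. The Fibonacci Quilt sequence $\{q_n\}$ has $q_1=1$ and each $q_i$ ($i\ge 2$) is the smallest positive integer with no FQ-legal decomposition using $q_1,\dots,q_{i-1}$ (it begins $1,2,3,4,5,7,9,12,\dots$). For a positive integer $m$, $k_{\min}(m)$ (resp. $k_{\max}(m)$) is the smallest (resp. largest) number of summands in any FQ-legal decomposition of $m$. *)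

theory Defs
  imports Complex_Main
begin

definition fq_legal :: "nat set \<Rightarrow> bool" where
  "fq_legal S \<longleftrightarrow> finite S \<and> 0 \<notin> S \<and>
     (\<forall>i\<in>S. \<forall>j\<in>S. i \<noteq> j \<longrightarrow> (if i \<le> j then j - i else i - j) \<notin> {1,3,4}) \<and>
     \<not> ({1,3} \<subseteq> S)"

text \<open>First n terms of the Fibonacci Quilt sequence (list position i-1 holds q_i).\<close>
fun fq_list :: "nat \<Rightarrow> nat list" where
  "fq_list 0 = []"
| "fq_list (Suc n) = (let l = fq_list n in
     l @ [LEAST x::nat. 0 < x \<and>
            \<not> (\<exists>S. S \<subseteq> {1..n} \<and> fq_legal S \<and> (\<Sum>i\<in>S. l ! (i - 1)) = x)])"

definition fq :: "nat \<Rightarrow> nat" where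
  "fq i = fq_list i ! (i - 1)"

definition fq_decomps :: "nat \<Rightarrow> nat set set" where
  "fq_decomps m = {S. fq_legal S \<and> (\<Sum>i\<in>S. fq i) = m}"

definition kmin :: "nat \<Rightarrow> nat" where
  "kmin m = Min (card ` fq_decomps m)"

definition kmax :: "nat \<Rightarrow> nat" where
  "kmax m = Max (card ` fq_decomps m)"

end

theory Submission
  imports Defs "HOL-Real_Asymp.Real_Asymp"
begin



fun g :: "nat \<Rightarrow> nat" where
  "g 0 = 1" | "g (Suc 0) = 1" | "g (Suc (Suc 0)) = 2" | "g (Suc (Suc (Suc 0))) = 3"
| "g (Suc (Suc (Suc (Suc 0)))) = 4"
| "g (Suc (Suc (Suc (Suc (Suc n))))) = g (Suc (Suc (Suc n))) + g (Suc (Suc n))"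

lemma g_small: "g 0 = 1" "g 1 = 1" "g 2 = 2" "g 3 = 3" "g 4 = 4" "g 5 = 5" "g 6 = 7" "g 7 = 9"
  "g 8 = 12" "g 9 = 16" "g 10 = 21"
  by (simp_all add: numeral_eq_Suc)

lemma g3: "n \<ge> 5 \<Longrightarrow> g n = g (n-2) + g (n-3)"
  by (cases n rule: g.cases) auto

lemma g_pos: "g n \<ge> 1"
  by (induction n rule: g.induct) auto

lemma g5: "n \<ge> 7 \<Longrightarrow> g n = g (n-1) + g (n-5)"
proof (induction n rule: less_induct)
  case (less n)
  show ?case
  proof (cases "n \<le> 9")
    case True
    then have "n = 7 \<or> n = 8 \<or> n = 9" using less.prems by auto
    then show ?thesis by (auto simp: g_small)
  next
    case False
    have a: "g (n-2) = g (n-3) + g (n-7)" using less.IH[of "n-2"] False by (simp add: numeral_eq_Suc)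
    have b: "g (n-3) = g (n-4) + g (n-8)" using less.IH[of "n-3"] False by (simp add: numeral_eq_Suc)
    have c: "g (n-1) = g (n-3) + g (n-4)" using g3[of "n-1"] False by (simp add: numeral_eq_Suc)
    have d: "g (n-5) = g (n-7) + g (n-8)" using g3[of "n-5"] False by (simp add: numeral_eq_Suc)
    show ?thesis using g3[of n] False a b c d by simp
  qed
qed

lemma g_mono_Suc: "g n \<le> g (Suc n)"
proof (cases "n \<ge> 6")
  case True then show ?thesis using g5[of "Suc n"] by simp
next
  case False then have "n \<in> {0,1,2,3,4,5}" by auto
  then show ?thesis by (auto simp: g_small numeral_eq_Suc)
qed

lemma g_strict_Suc: "n \<ge> 1 \<Longrightarrow> g n < g (Suc n)"
proof (cases "n \<ge> 6")
  case True then show ?thesis using g5[of "Suc n"] g_pos[of "n-4"] by simp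
next
  case False assume "n \<ge> 1" with False have "n \<in> {1,2,3,4,5}" by auto
  then show ?thesis by (auto simp: g_small numeral_eq_Suc)
qed

lemma g_mono: "m \<le> n \<Longrightarrow> g m \<le> g n"
  by (induction n) (auto simp: le_Suc_eq intro: order_trans[OF _ g_mono_Suc])

lemma g_strict: "1 \<le> m \<Longrightarrow> m < n \<Longrightarrow> g m < g n"
proof (induction n)
  case 0 then show ?case by simp
next
  case (Suc n)
  show ?case
  proof (cases "m = n")
    case True then show ?thesis using g_strict_Suc Suc by simp
  next
    case False then show ?thesis using Suc g_mono_Suc[of n] by simp
  qed
qed

lemma g_double: "g (Suc n) \<le> 2 * g n"
proof (cases "n \<ge> 6")
  case True then show ?thesis using g5[of "Suc n"] g_mono[of "n-4" n] by simp
next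
  case False then have "n \<in> {0,1,2,3,4,5}" by auto
  then show ?thesis by (auto simp: g_small numeral_eq_Suc)
qed

lemma g_pow: "g (n + k) \<le> 2^k * g n"
proof (induction k)
  case 0 then show ?case by simp
next
  case (Suc k) then show ?case using g_double[of "n+k"] by simp
qed

lemma g_ge: "n \<le> g n"
proof (induction n)
  case 0 then show ?case by simp
next
  case (Suc n) then show ?case
    using g_strict_Suc[of n] by (cases "n = 0") auto
qed




lemma legalD: "fq_legal S \<Longrightarrow> i \<in> S \<Longrightarrow> j \<in> S \<Longrightarrow> i < j \<Longrightarrow> j - i \<noteq> 1 \<and> j - i \<noteq> 3 \<and> j - i \<noteq> 4"
  unfolding fq_legal_def by (metis insertCI less_imp_le_nat nat_neq_iff)

lemma legal_fin: "fq_legal S \<Longrightarrow> finite S" unfolding fq_legal_def by auto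

lemma legal_subset: "fq_legal S \<Longrightarrow> T \<subseteq> S \<Longrightarrow> fq_legal T"
  unfolding fq_legal_def
  apply (intro conjI)
     apply (blast intro: finite_subset)
    apply blast
   apply (meson subsetD)
  apply blast
  done

lemma legalI:
  assumes "finite S" "0 \<notin> S" "\<not> {1,3} \<subseteq> S"
    "\<And>i j. i \<in> S \<Longrightarrow> j \<in> S \<Longrightarrow> i < j \<Longrightarrow> j - i \<noteq> 1 \<and> j - i \<noteq> 3 \<and> j - i \<noteq> 4"
  shows "fq_legal S"
  unfolding fq_legal_def using assms
  by (smt (verit, ccfv_threshold) insertE le_eq_less_or_eq nat_neq_iff singletonD)

lemma legal_insert_far:
  assumes "fq_legal S" "S \<subseteq> {1..k}" "k + 5 \<le> n"
  shows "fq_legal (insert n S)"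
proof (rule legalI)
  show "finite (insert n S)" using legal_fin[OF assms(1)] by simp
  show "0 \<notin> insert n S" using assms by auto
  show "\<not> {1, 3} \<subseteq> insert n S" using assms(1,3) unfolding fq_legal_def by auto
  fix i j assume "i \<in> insert n S" "j \<in> insert n S" "i < j"
  then show "j - i \<noteq> 1 \<and> j - i \<noteq> 3 \<and> j - i \<noteq> 4"
    using assms legalD[OF assms(1)] by fastforce
qed

lemma peel1:
  assumes "fq_legal S" "k \<in> S" "S \<subseteq> {1..k}" "k - 2 \<notin> S"
  shows "S - {k} \<subseteq> {1..k-5}"
proof
  fix x assume x: "x \<in> S - {k}"
  then have "x < k" "x \<ge> 1" using assms(3) by force+
  moreover have "k - x \<noteq> 1 \<and> k - x \<noteq> 3 \<and> k - x \<noteq> 4" using legalD[OF assms(1) _ assms(2) \<open>x<k\<close>] x by auto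
  moreover have "x \<noteq> k - 2" using x assms(4) by auto
  ultimately show "x \<in> {1..k-5}" by auto
qed

lemma peel2:
  assumes "fq_legal S" "k \<in> S" "S \<subseteq> {1..k}" "k - 2 \<in> S" "k \<ge> 2"
  shows "S - {k, k-2} \<subseteq> {1..k-7}"
proof
  fix x assume x: "x \<in> S - {k, k-2}"
  then have "x < k" "x \<ge> 1" using assms(3) by force+
  moreover have "k - x \<noteq> 1 \<and> k - x \<noteq> 3 \<and> k - x \<noteq> 4" using legalD[OF assms(1) _ assms(2) \<open>x<k\<close>] x by auto
  moreover have "x \<noteq> k - 2" using x by auto
  moreover have "x < k - 2 \<Longrightarrow> (k-2) - x \<noteq> 1 \<and> (k-2) - x \<noteq> 3 \<and> (k-2) - x \<noteq> 4"
    using legalD[OF assms(1) _ assms(4)] x by auto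
  ultimately show "x \<in> {1..k-7}" by (cases "x < k - 2") auto
qed

lemma sum_remove1: "finite S \<Longrightarrow> k \<in> S \<Longrightarrow> sum g S = g k + sum g (S - {k})"
  by (simp add: sum.remove)

lemma sum_remove2: "finite S \<Longrightarrow> k \<in> S \<Longrightarrow> j \<in> S \<Longrightarrow> j \<noteq> k \<Longrightarrow> sum g S = g k + g j + sum g (S - {k, j})"
proof -
  assume a: "finite S" "k \<in> S" "j \<in> S" "j \<noteq> k"
  have "sum g S = g k + sum g (S - {k})" using a by (simp add: sum.remove)
  also have "sum g (S - {k}) = g j + sum g (S - {k} - {j})" using a by (intro sum.remove) auto
  also have "S - {k} - {j} = S - {k, j}" by auto
  finally show ?thesis by simp
qed

lemma U_aux1: "k \<ge> 1 \<Longrightarrow> g k + g ((k-5)+3) \<le> g (k+3)"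
proof (cases "k \<ge> 7")
  case True
  then have e: "k-5+3 = k-2" by simp
  show ?thesis unfolding e using True g3[of "k+3"] g_mono[of "k-2" "k+1"] by simp
next
  case False assume "k \<ge> 1" with False have "k \<in> {1,2,3,4,5,6}" by auto
  then show ?thesis by (auto simp: g_small numeral_eq_Suc)
qed

lemma U_aux2: "k \<ge> 4 \<Longrightarrow> g k + g (k-2) + g ((k-7)+3) \<le> g (k+3)"
proof (cases "k \<ge> 8")
  case True
  then have e: "k-7+3 = k-4" by simp
  have e2: "g (k+1) = g (k-1) + g (k-2)" using g3[of "k+1"] True by simp
  show ?thesis unfolding e using True g3[of "k+3"] e2 g_mono[of "k-4" "k-1"] by simp
next
  case False assume "k \<ge> 4" with False have "k \<in> {4,5,6,7}" by auto
  then show ?thesis by (auto simp: g_small numeral_eq_Suc)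
qed

lemma U_bound: "fq_legal S \<Longrightarrow> S \<subseteq> {1..k} \<Longrightarrow> sum g S < g (k+3)"
proof (induction k arbitrary: S rule: less_induct)
  case (less k)
  have fin: "finite S" using legal_fin[OF less.prems(1)] .
  show ?case
  proof (cases "k \<in> S")
    case False
    show ?thesis
    proof (cases "k = 0")
      case True then have "S = {}" using less.prems by auto
      then show ?thesis using g_pos[of "k+3"] by simp
    next
      case False
      have "S \<subseteq> {1..k-1}"
      proof
        fix x assume "x \<in> S" then have "x \<in> {1..k}" "x \<noteq> k" using less.prems \<open>k \<notin> S\<close> by auto
        then show "x \<in> {1..k-1}" by auto
      qed
      then have "sum g S < g (k-1+3)" using less.IH[of "k-1"] less.prems False by simp
      also have "\<dots> \<le> g (k+3)" by (intro g_mono) simp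
      finally show ?thesis .
    qed
  next
    case True
    then have k1: "k \<ge> 1" using less.prems by auto
    show ?thesis
    proof (cases "k - 2 \<in> S")
      case False
      have s: "S - {k} \<subseteq> {1..k-5}" using peel1 less.prems True False by blast
      have "sum g (S - {k}) < g (k-5+3)"
        using less.IH[of "k-5" "S - {k}"] s legal_subset[OF less.prems(1), of "S - {k}"] k1 by simp
      then show ?thesis using sum_remove1[OF fin True] U_aux1[OF k1] by linarith
    next
      case True2: True
      have k2: "k \<ge> 3" using True2 less.prems(2) by auto
      have k4: "k \<ge> 4"
      proof (rule ccontr)
        assume "\<not> k \<ge> 4" then have "k = 3" using k2 by simp
        then have "{1,3} \<subseteq> S" using True True2 by simp
        then show False using less.prems(1) unfolding fq_legal_def by blast
      qed
      have s: "S - {k, k-2} \<subseteq> {1..k-7}" using peel2 less.prems True True2 k2 by simp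
      have "sum g (S - {k, k-2}) < g (k-7+3)"
        using less.IH[of "k-7" "S - {k, k-2}"] s legal_subset[OF less.prems(1), of "S - {k, k-2}"] k1 by simp
      moreover have "sum g S = g k + g (k-2) + sum g (S - {k, k-2})"
        using sum_remove2[OF fin True True2] k1 by simp
      ultimately show ?thesis using U_aux2[OF k4] by linarith
    qed
  qed
qed




lemma E_small: "\<forall>S\<in>Pow {1,2,3,4,5::nat}. fq_legal S \<longrightarrow> (\<forall>n\<in>{0,1,2,3,4,5}. S \<subseteq> {1..n} \<longrightarrow> sum g S \<noteq> g (n+1))"
  by (simp add: Pow_insert fq_legal_def g_small)

lemma E_bound: "fq_legal S \<Longrightarrow> S \<subseteq> {1..n} \<Longrightarrow> sum g S \<noteq> g (n+1)"
proof (induction n arbitrary: S rule: less_induct)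
  case (less n)
  have fin: "finite S" using legal_fin[OF less.prems(1)] .
  show ?case
  proof (cases "n \<le> 5")
    case True
    have "S \<in> Pow {1,2,3,4,5}" using less.prems(2) True by auto
    moreover have "n \<in> {0,1,2,3,4,5}" using True by auto
    ultimately show ?thesis using E_small less.prems by blast
  next
    case False
    then have n6: "n \<ge> 6" by simp
    have g31: "g (n+1) = g (n-1) + g (n-2)" using g3[of "n+1"] n6 by simp
    show ?thesis
    proof (cases "n \<in> S")
      case True
      have g51: "g (n+1) = g n + g (n-4)" using g5[of "n+1"] n6 by simp
      show ?thesis
      proof (cases "n - 2 \<in> S")
        case False
        have s: "S - {n} \<subseteq> {1..n-5}" using peel1 less.prems True False by blast
        have "sum g (S - {n}) \<noteq> g (n-5+1)"
          using less.IH[of "n-5" "S - {n}"] s legal_subset[OF less.prems(1), of "S - {n}"] n6 by simp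
        moreover have "n-5+1 = n-4" using n6 by simp
        ultimately show ?thesis using sum_remove1[OF fin True] g51 by auto
      next
        case True2: True
        have "sum g S = g n + g (n-2) + sum g (S - {n, n-2})"
          using sum_remove2[OF fin True True2] n6 by simp
        moreover have "g (n-4) < g (n-2)" using n6 by (intro g_strict) auto
        ultimately show ?thesis using g51 by linarith
      qed
    next
      case nS: False
      show ?thesis
      proof (cases "n - 1 \<in> S")
        case True
        have sub: "S \<subseteq> {1..n-1}"
        proof
          fix x assume "x \<in> S" then have "x \<in> {1..n}" "x \<noteq> n" using less.prems nS by auto
          then show "x \<in> {1..n-1}" by auto
        qed
        show ?thesis
        proof (cases "n - 1 - 2 \<in> S")
          case False
          have s: "S - {n-1} \<subseteq> {1..n-1-5}" using peel1 less.prems(1) True sub False by blast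
          have "sum g (S - {n-1}) < g (n-1-5+3)"
            using U_bound[of "S - {n-1}" "n-1-5"] s legal_subset[OF less.prems(1), of "S - {n-1}"] by simp
          moreover have "n-1-5+3 = n-3" using n6 by simp
          moreover have "g (n-3) \<le> g (n-2)" by (intro g_mono) simp
          ultimately show ?thesis using sum_remove1[OF fin True] g31 by auto
        next
          case True2: True
          have s: "S - {n-1, n-1-2} \<subseteq> {1..n-1-7}" by (rule peel2[OF less.prems(1) True sub True2]) (use n6 in simp)
          have sm: "sum g S = g (n-1) + g (n-3) + sum g (S - {n-1, n-1-2})"
            using sum_remove2[OF fin True True2] n6 by (simp add: numeral_eq_Suc)
          have st: "g (n-3) < g (n-2)" using n6 by (intro g_strict) auto
          show ?thesis
          proof
            assume eq: "sum g S = g (n+1)"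
            show False
            proof (cases "n \<ge> 9")
              case True
              have "g (n-2) = g (n-3) + g (n-7)" using g5[of "n-2"] True by (simp add: numeral_eq_Suc)
              moreover have "n-1-7+1 = n-7" using True by simp
              ultimately have "sum g (S - {n-1, n-1-2}) = g (n-1-7+1)" using eq sm g31 True by simp
              then show False using less.IH[of "n-1-7" "S - {n-1, n-1-2}"] s
                  legal_subset[OF less.prems(1), of "S - {n-1, n-1-2}"] n6 by simp
            next
              case False
              then have "S - {n-1, n-1-2} = {}" using s by auto
              then have "sum g (S - {n-1, n-1-2}) = 0" by (metis sum.empty)
              then show False using eq sm g31 st by linarith
            qed
          qed
        qed
      next
        case n1S: False
        show ?thesis
        proof (cases "n - 2 \<in> S")
          case True
          have sub: "S \<subseteq> {1..n-2}"
          proof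
            fix x assume "x \<in> S" then have "x \<in> {1..n}" "x \<noteq> n" "x \<noteq> n-1" using less.prems nS n1S by auto
            then show "x \<in> {1..n-2}" by auto
          qed
          show ?thesis
          proof (cases "n - 2 - 2 \<in> S")
            case False
            have s: "S - {n-2} \<subseteq> {1..n-2-5}" using peel1 less.prems(1) True sub False by blast
            have "sum g (S - {n-2}) < g (n-2-5+3)"
              using U_bound[of "S - {n-2}" "n-2-5"] s legal_subset[OF less.prems(1), of "S - {n-2}"] by simp
            moreover have "g (n-2-5+3) \<le> g (n-1)" using n6 by (intro g_mono) simp
            ultimately show ?thesis using sum_remove1[OF fin True] g31 by auto
          next
            case True2: True
            have s: "S - {n-2, n-2-2} \<subseteq> {1..n-2-7}" by (rule peel2[OF less.prems(1) True sub True2]) (use n6 in simp)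
            have sm: "sum g S = g (n-2) + g (n-4) + sum g (S - {n-2, n-2-2})"
              using sum_remove2[OF fin True True2] n6 by (simp add: numeral_eq_Suc)
            have "sum g (S - {n-2, n-2-2}) < g (n-2-7+3)"
              using U_bound[of "S - {n-2, n-2-2}" "n-2-7"] s legal_subset[OF less.prems(1), of "S - {n-2, n-2-2}"] by simp
            moreover have "g (n-2-7+3) \<le> g (n-3)" using n6 by (intro g_mono) simp
            moreover have "g (n-1) = g (n-3) + g (n-4)" using g3[of "n-1"] n6 by (simp add: numeral_eq_Suc)
            ultimately show ?thesis using sm g31 by linarith
          qed
        next
          case n2S: False
          have sub: "S \<subseteq> {1..n-3}"
          proof
            fix x assume "x \<in> S" then have "x \<in> {1..n}" "x \<noteq> n" "x \<noteq> n-1" "x \<noteq> n-2"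
              using less.prems nS n1S n2S by auto
            then show "x \<in> {1..n-3}" by auto
          qed
          have "sum g S < g (n-3+3)" using U_bound[OF less.prems(1) sub] .
          moreover have "g (n-3+3) \<le> g (n+1)" using n6 by (intro g_mono) simp
          ultimately show ?thesis by simp
        qed
      qed
    qed
  qed
qed

lemma rep_all: "x < g (Suc n) \<Longrightarrow> \<exists>S. S \<subseteq> {1..n} \<and> fq_legal S \<and> sum g S = x"
proof (induction n arbitrary: x rule: less_induct)
  case (less n)
  show ?case
  proof (cases "n \<le> 5")
    case True
    have "x < 7" using less.prems g_mono[of "Suc n" 6] True by (simp add: g_small)
    show ?thesis
    proof (cases "x \<le> 5")
      case True
      show ?thesis
      proof (cases "x = 0")
        case True then show ?thesis by (intro exI[of _ "{}"]) (simp add: fq_legal_def)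
      next
        case False
        have "x \<le> n"
        proof (rule ccontr)
          assume "\<not> x \<le> n" then have "Suc n \<le> x" by simp
          then have "g (Suc n) \<le> g x" by (rule g_mono)
          moreover have "x \<in> {1,2,3,4,5}" using \<open>x \<le> 5\<close> False by auto
          ultimately show False using less.prems by (auto simp: g_small)
        qed
        moreover have "g x = x" using \<open>x \<le> 5\<close> False
        proof -
          have "x = 1 \<or> x = 2 \<or> x = 3 \<or> x = 4 \<or> x = 5" using \<open>x \<le> 5\<close> False by auto
          then show ?thesis by (elim disjE) (simp_all add: g_small)
        qed
        ultimately show ?thesis using False True
          by (intro exI[of _ "{x}"]) (auto simp: fq_legal_def)
      qed
    next
      case False
      then have "x = 6" using \<open>x < 7\<close> by simp
      have "n = 5"
      proof (rule ccontr)
        assume "n \<noteq> 5" then have "Suc n \<le> 5" using True by simp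
        then have "g (Suc n) \<le> 5" using g_mono[of "Suc n" 5] by (simp add: g_small)
        then show False using less.prems \<open>x = 6\<close> by simp
      qed
      then show ?thesis using \<open>x = 6\<close> by (intro exI[of _ "{2,4}"]) (auto simp: fq_legal_def g_small)
    qed
  next
    case False
    then have n6: "n \<ge> 6" by simp
    show ?thesis
    proof (cases "x < g n")
      case True
      then obtain S where S1: "S \<subseteq> {1..n-1}" "fq_legal S" "sum g S = x"
        using less.IH[of "n-1" x] n6 by auto
      have "{1..n-1} \<subseteq> {1..n}" by auto
      then show ?thesis using S1 by (intro exI[of _ S]) blast
    next
      case False
      have g51: "g (Suc n) = g n + g (n-4)" using g5[of "Suc n"] n6 by simp
      moreover have "Suc (n-5) = n - 4" using n6 by simp
      ultimately have "x - g n < g (Suc (n-5))" using less.prems False n6 by simp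
      then obtain S where S: "S \<subseteq> {1..n-5}" "fq_legal S" "sum g S = x - g n"
        using less.IH[of "n-5" "x - g n"] n6 by auto
      have "n \<notin> {1..n-5}" using n6 by simp
      then have nS: "n \<notin> S" using S(1) by blast
      show ?thesis
      proof (intro exI[of _ "insert n S"] conjI)
        have "{1..n-5} \<subseteq> {1..n}" by auto
        then have "S \<subseteq> {1..n}" using S(1) by (rule subset_trans[rotated])
        then show "insert n S \<subseteq> {1..n}" using n6 by simp
        show "fq_legal (insert n S)" by (rule legal_insert_far[OF S(2) S(1)]) (use n6 in simp)
        have "sum g (insert n S) = g n + sum g S" using legal_fin[OF S(2)] nS by simp
        then show "sum g (insert n S) = x" using S(3) False by linarith
      qed
    qed
  qed
qed

lemma fq_list_eq: "fq_list n = map g [1..<Suc n]"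
proof (induction n)
  case 0 then show ?case by simp
next
  case (Suc n)
  define l where "l = fq_list n"
  have l: "l = map g [1..<Suc n]" using Suc l_def by simp
  have nth: "\<And>i. i \<in> {1..n} \<Longrightarrow> l ! (i - 1) = g i" unfolding l
    by (subst nth_map) (auto simp del: upt_Suc simp add: nth_upt)
  have sumeq: "\<And>S. S \<subseteq> {1..n} \<Longrightarrow> (\<Sum>i\<in>S. l ! (i - 1)) = sum g S"
    using nth by (intro sum.cong) auto
  have P: "(\<lambda>x. 0 < x \<and> \<not> (\<exists>S. S \<subseteq> {1..n} \<and> fq_legal S \<and> (\<Sum>i\<in>S. l ! (i - 1)) = x))
       = (\<lambda>x. 0 < x \<and> \<not> (\<exists>S. S \<subseteq> {1..n} \<and> fq_legal S \<and> sum g S = x))"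
    using sumeq by (intro ext) (metis)
  have least: "(LEAST x::nat. 0 < x \<and> \<not> (\<exists>S. S \<subseteq> {1..n} \<and> fq_legal S \<and> sum g S = x)) = g (Suc n)"
  proof (rule Least_equality)
    show "0 < g (Suc n) \<and> \<not> (\<exists>S. S \<subseteq> {1..n} \<and> fq_legal S \<and> sum g S = g (Suc n))"
      using g_pos[of "Suc n"] E_bound[of _ n] by auto
    fix y assume "0 < y \<and> \<not> (\<exists>S. S \<subseteq> {1..n} \<and> fq_legal S \<and> sum g S = y)"
    then show "g (Suc n) \<le> y" using rep_all[of y n] by (meson not_le)
  qed
  have "fq_list (Suc n) = l @ [LEAST x::nat. 0 < x \<and> \<not> (\<exists>S. S \<subseteq> {1..n} \<and> fq_legal S \<and> (\<Sum>i\<in>S. l ! (i - 1)) = x)]"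
    by (simp add: Let_def l_def)
  also have "\<dots> = l @ [g (Suc n)]" using P least by simp
  finally have "fq_list (Suc n) = l @ [g (Suc n)]" .
  then show ?case using l by simp
qed

lemma fq_eq: "i \<ge> 1 \<Longrightarrow> fq i = g i"
  unfolding fq_def fq_list_eq by (subst nth_map) (auto simp del: upt_Suc simp add: nth_upt)




function grd :: "nat \<Rightarrow> nat \<Rightarrow> nat set \<times> nat \<times> nat" where
  "grd m z = (if z \<le> 10 then ({}, m, z)
     else if g (z-1) \<le> m then (case grd (m - g (z-1)) (z-5) of (G, r, w) \<Rightarrow> (insert (z-1) G, r, w))
     else grd m (z-1))"
  by pat_completeness auto
termination by (relation "measure (\<lambda>(m,z). z)") auto

declare grd.simps[simp del]

definition GG where "GG m z = fst (grd m z)"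

lemma grd_low: "z \<le> 10 \<Longrightarrow> grd m z = ({}, m, z)"
  by (subst grd.simps) simp

lemma grd_take: "z > 10 \<Longrightarrow> g (z-1) \<le> m \<Longrightarrow>
   grd m z = (case grd (m - g (z-1)) (z-5) of (G, r, w) \<Rightarrow> (insert (z-1) G, r, w))"
  by (subst grd.simps) simp

lemma grd_skip: "z > 10 \<Longrightarrow> m < g (z-1) \<Longrightarrow> grd m z = grd m (z-1)"
  by (subst grd.simps) simp

lemma GG_take: "z > 10 \<Longrightarrow> g (z-1) \<le> m \<Longrightarrow> GG m z = insert (z-1) (GG (m - g (z-1)) (z-5))"
  unfolding GG_def using grd_take by (simp split: prod.split)

lemma grd_inv:
  "m < g z \<Longrightarrow> 6 \<le> z \<Longrightarrow> (case grd m z of (G, r, w) \<Rightarrow>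
     sum g G + r = m \<and> r < g w \<and> G \<subseteq> {10..<z} \<and> 6 \<le> w \<and> w \<le> 10 \<and> w \<le> z
     \<and> (\<forall>x\<in>G. w + 4 \<le> x) \<and> (\<forall>x\<in>G. \<forall>y\<in>G. x < y \<longrightarrow> x + 5 \<le> y) \<and> finite G)"
proof (induction m z rule: grd.induct)
  case (1 m z)
  show ?case
  proof (cases "z \<le> 10")
    case True then show ?thesis using 1 grd_low[OF True] by simp
  next
    case False
    show ?thesis
    proof (cases "g (z-1) \<le> m")
      case True
      have gz: "g z = g (z-1) + g (z-5)" using g5[of z] False by simp
      have lt: "m - g (z-1) < g (z-5)" using 1(3) gz True by simp
      obtain G r w where e: "grd (m - g (z-1)) (z-5) = (G, r, w)" by (metis prod_cases3)
      have IH: "sum g G + r = m - g (z-1) \<and> r < g w \<and> G \<subseteq> {10..<z-5} \<and> 6 \<le> w \<and> w \<le> 10 \<and> w \<le> z-5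
        \<and> (\<forall>x\<in>G. w + 4 \<le> x) \<and> (\<forall>x\<in>G. \<forall>y\<in>G. x < y \<longrightarrow> x + 5 \<le> y) \<and> finite G"
        using 1(1)[OF False True lt] False e by simp
      have "z - 1 \<notin> {10..<z-5}" using False by auto
      then have nz: "z - 1 \<notin> G" using IH by blast
      have R: "grd m z = (insert (z-1) G, r, w)" using grd_take[of z m] False True e by simp
      moreover have "sum g (insert (z-1) G) = g (z-1) + sum g G" using IH nz by simp
      moreover have "\<forall>x\<in>G. x + 5 \<le> z - 1"
      proof
        fix x assume "x \<in> G" then have "x \<in> {10..<z-5}" using IH by blast
        then show "x + 5 \<le> z - 1" using False by auto
      qed
      moreover have "insert (z-1) G \<subseteq> {10..<z}"
      proof -
        have "{10..<z-5} \<subseteq> {10..<z}" by auto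
        then have "G \<subseteq> {10..<z}" using IH by blast
        then show ?thesis using False by auto
      qed
      ultimately show ?thesis
      unfolding R prod.case
      proof (intro conjI)
        show "r < g w" "6 \<le> w" "w \<le> 10" using IH by blast+
        have "w \<le> z - 5" "finite G" using IH by blast+
        then show "w \<le> z" "finite (insert (z - 1) G)" by auto
        show "insert (z-1) G \<subseteq> {10..<z}" by fact
        have "sum g G + r = m - g (z-1)" using IH by blast
        then show "sum g (insert (z - 1) G) + r = m" using True \<open>sum g (insert (z-1) G) = g (z-1) + sum g G\<close> by linarith
        have I6: "w \<le> z - 5" and I7: "\<forall>x\<in>G. w + 4 \<le> x" using IH by blast+
        show "\<forall>x\<in>insert (z - 1) G. w + 4 \<le> x"
        proof
          fix x assume "x \<in> insert (z - 1) G"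
          then show "w + 4 \<le> x" using I6 I7 False by (cases "x = z - 1") auto
        qed
        show "\<forall>x\<in>insert (z - 1) G. \<forall>y\<in>insert (z - 1) G. x < y \<longrightarrow> x + 5 \<le> y"
        proof (intro ballI impI)
          fix x y assume xy: "x \<in> insert (z - 1) G" "y \<in> insert (z - 1) G" "x < y"
          show "x + 5 \<le> y"
          proof (cases "y = z - 1")
            case True
            then have "x \<in> G" using xy by auto
            then have "x + 5 \<le> z - 1" using \<open>\<forall>x\<in>G. x + 5 \<le> z - 1\<close> by blast
            then show ?thesis using True by simp
          next
            case False
            then have "y \<in> G" using xy by auto
            moreover have "y + 5 \<le> z - 1" using \<open>y \<in> G\<close> \<open>\<forall>x\<in>G. x + 5 \<le> z - 1\<close> by blast
            then have "x \<noteq> z - 1" using xy(3) by simp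
            then have "x \<in> G" using xy(1) by simp
            moreover have I8: "\<forall>x\<in>G. \<forall>y\<in>G. x < y \<longrightarrow> x + 5 \<le> y" using IH by blast
            ultimately show ?thesis using xy(3) \<open>y \<in> G\<close> by blast
          qed
        qed
      qed
    next
      case False2: False
      have IH: "case grd m (z-1) of (G, r, w) \<Rightarrow>
     sum g G + r = m \<and> r < g w \<and> G \<subseteq> {10..<z-1} \<and> 6 \<le> w \<and> w \<le> 10 \<and> w \<le> z-1
     \<and> (\<forall>x\<in>G. w + 4 \<le> x) \<and> (\<forall>x\<in>G. \<forall>y\<in>G. x < y \<longrightarrow> x + 5 \<le> y) \<and> finite G"
        using 1(2)[OF False False2] False False2 by simp
      obtain G r w where e: "grd m (z-1) = (G, r, w)" by (metis prod_cases3)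
      have "{10..<z-1} \<subseteq> {10..<z}" by auto
      moreover have Gs: "G \<subseteq> {10..<z-1}" using IH e by simp
      ultimately have "G \<subseteq> {10..<z}" by (meson subset_trans)
      moreover have R: "grd m z = (G, r, w)" using grd_skip[of z m] False False2 e by simp
      moreover have "w \<le> z - 1" using IH e by simp
      ultimately show ?thesis using IH e by (simp del: One_nat_def)
    qed
  qed
qed

lemma L1: "m < g z \<Longrightarrow> 10 \<le> w \<Longrightarrow> w \<le> z \<Longrightarrow>
   (m < g w \<longrightarrow> grd m z = grd m w) \<and> (g w \<le> m \<longrightarrow> (\<exists>x\<in>GG m z. w \<le> x \<and> x < z))"
proof (induction z)
  case 0 then show ?case by simp
next
  case (Suc z)
  show ?case
  proof (cases "w = Suc z")
    case True then show ?thesis using Suc.prems by simp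
  next
    case False
    then have wz: "w \<le> z" "Suc z > 10" using Suc.prems by auto
    show ?thesis
    proof (cases "g z \<le> m")
      case True
      have "g w \<le> g z" using wz by (intro g_mono)
      moreover have "z \<in> GG m (Suc z)" using GG_take[of "Suc z" m] wz True by simp
      ultimately show ?thesis using wz True by auto
    next
      case False2: False
      have e: "grd m (Suc z) = grd m z" using grd_skip[of "Suc z" m] wz False2 by simp
      have mz: "m < g z" using False2 by simp
      note IH = Suc.IH[OF mz Suc.prems(2) wz(1)]
      have GGe: "GG m (Suc z) = GG m z" unfolding GG_def e by (rule refl)
      show ?thesis
      proof (intro conjI impI)
        assume "m < g w" then show "grd m (Suc z) = grd m w" using IH e by simp
      next
        assume "g w \<le> m"
        then obtain x where "x \<in> GG m z" "w \<le> x" "x < z" using IH by blast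
        then show "\<exists>x\<in>GG m (Suc z). w \<le> x \<and> x < Suc z" using GGe by auto
      qed
    qed
  qed
qed

lemma L2: "g d \<le> m \<Longrightarrow> m < g (Suc d) \<Longrightarrow> 10 \<le> d \<Longrightarrow> d < z \<Longrightarrow> m < g z \<Longrightarrow>
   grd m z = (case grd (m - g d) (d-4) of (G, r, w) \<Rightarrow> (insert d G, r, w))"
proof -
  assume a: "g d \<le> m" "m < g (Suc d)" "10 \<le> d" "d < z" "m < g z"
  have "grd m z = grd m (Suc d)" using L1[of m z "Suc d"] a by simp
  also have "\<dots> = (case grd (m - g d) (d-4) of (G, r, w) \<Rightarrow> (insert d G, r, w))"
    using grd_take[of "Suc d" m] a by (simp del: g.simps)
  finally show ?thesis .
qed

lemma GG_L2: "g d \<le> m \<Longrightarrow> m < g (Suc d) \<Longrightarrow> 10 \<le> d \<Longrightarrow> d < z \<Longrightarrow> m < g z \<Longrightarrow>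
   GG m z = insert d (GG (m - g d) (d-4))"
proof -
  assume a: "g d \<le> m" "m < g (Suc d)" "10 \<le> d" "d < z" "m < g z"
  obtain G r w where e: "grd (m - g d) (d-4) = (G, r, w)" by (metis prod_cases3)
  have "grd m z = (insert d G, r, w)" using L2[OF a] e by simp
  then show ?thesis unfolding GG_def using e by simp
qed

lemma GG_sub: "m < g z \<Longrightarrow> 6 \<le> z \<Longrightarrow> GG m z \<subseteq> {10..<z}"
proof -
  assume a: "m < g z" "6 \<le> z"
  obtain G r w where e: "grd m z = (G, r, w)" by (metis prod_cases3)
  have "G \<subseteq> {10..<z}" using grd_inv[OF a] e by simp
  then show ?thesis unfolding GG_def e by simp
qed

lemma GG_L1: "m < g z \<Longrightarrow> 10 \<le> w \<Longrightarrow> w \<le> z \<Longrightarrow> m < g w \<Longrightarrow> GG m z = GG m w"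
proof -
  assume a: "m < g z" "10 \<le> w" "w \<le> z" "m < g w"
  have "grd m z = grd m w" using L1[OF a(1-3)] a(4) by blast
  then show ?thesis unfolding GG_def by simp
qed




definition ab :: "nat \<Rightarrow> nat" where "ab b = 10 + 20 * b"
definition blk :: "nat \<Rightarrow> nat set" where "blk b = {ab b..<ab b + 20}"
definition pat :: "nat \<Rightarrow> nat set" where "pat b = {ab b + 10, ab b + 15}"
definition Vb :: "nat \<Rightarrow> nat" where "Vb b = g (ab b + 15) + g (ab b + 10)"
definition occ :: "nat \<Rightarrow> nat \<Rightarrow> nat \<Rightarrow> nat" where
  "occ B m z = card {b \<in> {..<B}. GG m z \<inter> blk b = pat b}"

lemma match_lemma:
  assumes a10: "10 \<le> a" and z1: "a + 16 \<le> z" and z2: "z \<le> a + 20" and mz: "m < g z"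
  shows "(GG m z \<inter> {a..<a+20} = {a+10, a+15}) \<longleftrightarrow> (g (a+15) + g (a+10) \<le> m \<and> m < g (a+15) + g (a+10) + g a)"
    and "g (a+15) + g (a+10) \<le> m \<Longrightarrow> m < g (a+15) + g (a+10) + g a \<Longrightarrow>
          GG m z = insert (a+15) (insert (a+10) (GG (m - (g (a+15) + g (a+10))) a))"
proof -
  have e16: "g (a+16) = g (a+15) + g (a+11)" using g5[of "a+16"] by (simp add: algebra_simps)
  have e11: "g (a+11) = g (a+10) + g (a+6)" using g5[of "a+11"] by (simp add: algebra_simps)
  have ga6: "g a \<le> g (a+6)" by (rule g_mono) simp
  define V where "V = g (a+15) + g (a+10)"
  have "((GG m z \<inter> {a..<a+20} = {a+10, a+15}) \<longleftrightarrow> (V \<le> m \<and> m < V + g a)) \<and>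
        (V \<le> m \<longrightarrow> m < V + g a \<longrightarrow> GG m z = insert (a+15) (insert (a+10) (GG (m - V) a)))"
  proof (cases "g (a+16) \<le> m")
    case True
    obtain x where x: "x \<in> GG m z" "a + 16 \<le> x" "x < z" using L1[OF mz _ z1] True a10 by auto
    then have "x \<in> GG m z \<inter> {a..<a+20}" "x \<notin> {a+10, a+15}" using z2 by auto
    then have "GG m z \<inter> {a..<a+20} \<noteq> {a+10, a+15}" by blast
    moreover have "\<not> m < V + g a" using True e16 e11 ga6 unfolding V_def by simp
    ultimately show ?thesis by blast
  next
    case False
    show ?thesis
    proof (cases "m < g (a+15)")
      case True
      have "GG m z = GG m (a+15)" by (rule GG_L1[OF mz]) (use a10 z1 True in auto)
      moreover have "GG m (a+15) \<subseteq> {10..<a+15}" by (rule GG_sub) (use True in auto)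
      ultimately have "a + 15 \<notin> GG m z" by auto
      then have "GG m z \<inter> {a..<a+20} \<noteq> {a+10, a+15}" by blast
      moreover have "\<not> V \<le> m" using True unfolding V_def by simp
      ultimately show ?thesis by blast
    next
      case False2: False
      define m1 where "m1 = m - g (a+15)"
      have m1lt: "m1 < g (a+11)" using False e16 False2 unfolding m1_def by simp
      have G1': "GG m z = insert (a+15) (GG m1 (a+15-4))" unfolding m1_def
        by (rule GG_L2) (use False False2 mz a10 z1 in \<open>auto simp: algebra_simps\<close>)
      have e4: "a+15-4 = a+11" by simp
      have G1: "GG m z = insert (a+15) (GG m1 (a+11))" using G1' unfolding e4 .
      show ?thesis
      proof (cases "m1 < g (a+10)")
        case True
        have "GG m1 (a+11) = GG m1 (a+10)" by (rule GG_L1[OF m1lt]) (use a10 True in auto)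
        moreover have "GG m1 (a+10) \<subseteq> {10..<a+10}" by (rule GG_sub) (use True in auto)
        ultimately have "a + 10 \<notin> GG m z" using G1 by auto
        then have "GG m z \<inter> {a..<a+20} \<noteq> {a+10, a+15}" by blast
        moreover have "\<not> V \<le> m" using True False2 unfolding V_def m1_def by simp
        ultimately show ?thesis by blast
      next
        case False3: False
        define m2 where "m2 = m1 - g (a+10)"
        have m2lt: "m2 < g (a+6)" using False3 e11 m1lt unfolding m2_def by simp
        have G2': "GG m1 (a+11) = insert (a+10) (GG m2 (a+10-4))" unfolding m2_def
          by (rule GG_L2) (use False3 m1lt a10 in \<open>auto simp: algebra_simps\<close>)
        have e4': "a+10-4 = a+6" by simp
        have G2: "GG m1 (a+11) = insert (a+10) (GG m2 (a+6))" using G2' unfolding e4' .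
        have mV: "m - V = m2" unfolding V_def m2_def m1_def by simp
        show ?thesis
        proof (cases "m2 < g a")
          case True
          have "GG m2 (a+6) = GG m2 a" by (rule GG_L1[OF m2lt]) (use a10 True in auto)
          moreover have S: "GG m2 a \<subseteq> {10..<a}" by (rule GG_sub) (use True a10 in auto)
          ultimately have GGe: "GG m z = insert (a+15) (insert (a+10) (GG m2 a))" using G1 G2 by simp
          have "GG m z \<inter> {a..<a+20} = {a+10, a+15}" unfolding GGe using S by auto
          moreover have "V \<le> m \<and> m < V + g a" using True False2 False3 unfolding V_def m2_def m1_def by linarith
          ultimately show ?thesis using GGe mV by simp
        next
          case False4: False
          obtain x where x: "x \<in> GG m2 (a+6)" "a \<le> x" "x < a+6" using L1[OF m2lt a10, of] False4 by auto
          then have "x \<in> GG m z \<inter> {a..<a+20}" "x \<notin> {a+10, a+15}" using G1 G2 by auto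
          then have "GG m z \<inter> {a..<a+20} \<noteq> {a+10, a+15}" by blast
          moreover have "\<not> m < V + g a" using False4 False2 False3 unfolding V_def m2_def m1_def by linarith
          ultimately show ?thesis by blast
        qed
      qed
    qed
  qed
  then show "(GG m z \<inter> {a..<a+20} = {a+10, a+15}) \<longleftrightarrow> (g (a+15) + g (a+10) \<le> m \<and> m < g (a+15) + g (a+10) + g a)"
    and "g (a+15) + g (a+10) \<le> m \<Longrightarrow> m < g (a+15) + g (a+10) + g a \<Longrightarrow>
          GG m z = insert (a+15) (insert (a+10) (GG (m - (g (a+15) + g (a+10))) a))"
    unfolding V_def by blast+
qed


lemma ab_ge: "10 \<le> ab b" unfolding ab_def by simp

lemma blk_below: "b < B \<Longrightarrow> x \<in> blk b \<Longrightarrow> x < ab B"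
  unfolding blk_def ab_def by auto

lemma occ_skip: "10 < z \<Longrightarrow> m < g (z-1) \<Longrightarrow> occ B m z = occ B m (z-1)"
proof -
  assume a: "10 < z" "m < g (z-1)"
  have "grd m z = grd m (z-1)" using grd_skip[OF a] .
  then have "GG m z = GG m (z-1)" unfolding GG_def by simp
  then show ?thesis unfolding occ_def by simp
qed

lemma occ_take: "10 < z \<Longrightarrow> ab B < z \<Longrightarrow> g (z-1) \<le> m \<Longrightarrow> occ B m z = occ B (m - g (z-1)) (z-5)"
proof -
  assume a: "10 < z" "ab B < z" "g (z-1) \<le> m"
  have e: "GG m z = insert (z-1) (GG (m - g (z-1)) (z-5))" using GG_take[OF a(1) a(3)] .
  have "\<And>b. b < B \<Longrightarrow> GG m z \<inter> blk b = GG (m - g (z-1)) (z-5) \<inter> blk b"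
  proof -
    fix b assume "b < B"
    then have "z - 1 \<notin> blk b" using blk_below[of b B "z-1"] a(2) by auto
    then show "GG m z \<inter> blk b = GG (m - g (z-1)) (z-5) \<inter> blk b" unfolding e by auto
  qed
  then have "{b \<in> {..<B}. GG m z \<inter> blk b = pat b} = {b \<in> {..<B}. GG (m - g (z-1)) (z-5) \<inter> blk b = pat b}"
    by auto
  then show ?thesis unfolding occ_def by simp
qed

lemma Vb_bound: "Vb b + g (ab b) \<le> g (ab b + 16)"
proof -
  have e16: "g (ab b+16) = g (ab b+15) + g (ab b+11)" using g5[of "ab b+16"] by (simp add: algebra_simps)
  have e11: "g (ab b+11) = g (ab b+10) + g (ab b+6)" using g5[of "ab b+11"] by (simp add: algebra_simps)
  have "g (ab b) \<le> g (ab b+6)" by (rule g_mono) simp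
  then show ?thesis unfolding Vb_def using e16 e11 by simp
qed

lemma occ_Suc:
  assumes z1: "ab b + 16 \<le> z" and z2: "z \<le> ab b + 20" and mz: "m < g z"
  shows "occ (Suc b) m z = occ b m z + (if Vb b \<le> m \<and> m < Vb b + g (ab b) then 1 else 0)"
proof -
  have iff: "(GG m z \<inter> blk b = pat b) \<longleftrightarrow> (Vb b \<le> m \<and> m < Vb b + g (ab b))"
    using match_lemma(1)[OF ab_ge z1 z2 mz] unfolding blk_def pat_def Vb_def .
  have e: "{b' \<in> {..<Suc b}. GG m z \<inter> blk b' = pat b'} =
        {b' \<in> {..<b}. GG m z \<inter> blk b' = pat b'} \<union> (if GG m z \<inter> blk b = pat b then {b} else {})"
    by (auto simp: less_Suc_eq)
  show ?thesis unfolding occ_def e iff by auto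
qed

lemma occ_shift:
  assumes z1: "ab b + 16 \<le> z" and z2: "z \<le> ab b + 20" and r: "r < g (ab b)"
  shows "occ b (Vb b + r) z = occ b r (ab b)"
proof -
  have mz: "Vb b + r < g z" using Vb_bound[of b] r g_mono[of "ab b + 16" z] z1 by simp
  have GGe: "GG (Vb b + r) z = insert (ab b+15) (insert (ab b+10) (GG r (ab b)))"
    using match_lemma(2)[OF ab_ge z1 z2 mz] r unfolding Vb_def by simp
  have "\<And>b'. b' < b \<Longrightarrow> GG (Vb b + r) z \<inter> blk b' = GG r (ab b) \<inter> blk b'"
  proof -
    fix b' assume "b' < b"
    then have "ab b + 15 \<notin> blk b'" "ab b + 10 \<notin> blk b'" using blk_below[of b' b] by force+
    then show "GG (Vb b + r) z \<inter> blk b' = GG r (ab b) \<inter> blk b'" unfolding GGe by auto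
  qed
  then have "{b' \<in> {..<b}. GG (Vb b + r) z \<inter> blk b' = pat b'} = {b' \<in> {..<b}. GG r (ab b) \<inter> blk b' = pat b'}"
    by auto
  then show ?thesis unfolding occ_def by simp
qed

lemma sum_split_nat: "(\<Sum>m<(x::nat)+y. f m) = (\<Sum>m<x. f m) + (\<Sum>r<y. f (x + r))"
  by (induction y) (simp_all add: add.assoc)

definition W :: "nat \<Rightarrow> nat \<Rightarrow> real" where
  "W B z = (\<Sum>m<g z. (1/2::real) ^ occ B m z)"

lemma W_step: "10 < z \<Longrightarrow> ab B < z \<Longrightarrow> W B z = W B (z-1) + W B (z-5)"
proof -
  assume a: "10 < z" "ab B < z"
  have gz: "g z = g (z-1) + g (z-5)" using g5[of z] a by simp
  have "W B z = (\<Sum>m<g (z-1). (1/2::real) ^ occ B m z) + (\<Sum>r<g (z-5). (1/2::real) ^ occ B (g (z-1) + r) z)"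
    unfolding W_def gz by (rule sum_split_nat)
  also have "(\<Sum>m<g (z-1). (1/2::real) ^ occ B m z) = W B (z-1)"
    unfolding W_def by (rule sum.cong) (use occ_skip[OF a(1)] in auto)
  also have "(\<Sum>r<g (z-5). (1/2::real) ^ occ B (g (z-1) + r) z) = W B (z-5)"
    unfolding W_def by (rule sum.cong) (use occ_take[OF a(1) a(2)] in auto)
  finally show ?thesis .
qed


lemma Tgen:
  assumes H1: "\<And>z. ab B - 4 \<le> z \<Longrightarrow> z < ab B \<Longrightarrow> W B z \<le> \<mu> * real (g z)"
    and H2: "W B (ab B) \<le> \<mu> * real (g (ab B))"
  shows "ab B \<le> z \<Longrightarrow> W B z \<le> \<mu> * (real (g z) - real (g (ab B))) + W B (ab B)"
proof (induction z rule: less_induct)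
  case (less z)
  show ?case
  proof (cases "z = ab B")
    case True then show ?thesis by simp
  next
    case False
    then have z: "ab B < z" using less.prems by simp
    then have z10: "10 < z" using ab_ge[of B] by simp
    have step: "W B z = W B (z-1) + W B (z-5)" using W_step[OF z10 z] .
    have A: "W B (z-1) \<le> \<mu> * (real (g (z-1)) - real (g (ab B))) + W B (ab B)"
      using less.IH[of "z-1"] z by simp
    have Bz: "W B (z-5) \<le> \<mu> * real (g (z-5))"
    proof (cases "ab B \<le> z - 5")
      case True
      then have "W B (z-5) \<le> \<mu> * (real (g (z-5)) - real (g (ab B))) + W B (ab B)"
        using less.IH[of "z-5"] z by simp
      then show ?thesis using H2 by (simp add: algebra_simps)
    next
      case False
      then show ?thesis using H1[of "z-5"] z by simp
    qed
    have gz: "real (g z) = real (g (z-1)) + real (g (z-5))" using g5[of z] z10 by simp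
    have "\<mu> * (real (g z) - real (g (ab B))) = \<mu> * (real (g (z-1)) - real (g (ab B))) + \<mu> * real (g (z-5))"
      unfolding gz by (simp add: algebra_simps)
    then show ?thesis using step A Bz by linarith
  qed
qed

definition th :: real where "th = 1 - 1/2^21"

lemma th_pos: "0 \<le> th" "th < 1" unfolding th_def by simp_all

lemma W0: "W 0 z = real (g z)"
  unfolding W_def occ_def by simp

lemma W_Suc_eq:
  assumes z1: "ab b + 16 \<le> z" and z2: "z \<le> ab b + 20"
  shows "W (Suc b) z = W b z - W b (ab b) / 2"
proof -
  define V where "V = Vb b"
  define a where "a = ab b"
  define h where "h m = (1/2::real) ^ occ b m z" for m
  define F where "F m = (if V \<le> m \<and> m < V + g a then h m / 2 else 0)" for m
  have pt: "\<And>m. m < g z \<Longrightarrow> (1/2::real) ^ occ (Suc b) m z = h m - F m"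
  proof -
    fix m assume "m < g z"
    then have "occ (Suc b) m z = occ b m z + (if V \<le> m \<and> m < V + g a then 1 else 0)"
      using occ_Suc[OF z1 z2] unfolding V_def a_def by blast
    then show "(1/2::real) ^ occ (Suc b) m z = h m - F m" unfolding h_def F_def by auto
  qed
  have "W (Suc b) z = (\<Sum>m<g z. h m - F m)" unfolding W_def by (rule sum.cong) (use pt in auto)
  also have "\<dots> = W b z - (\<Sum>m<g z. F m)" unfolding W_def h_def by (simp add: sum_subtractf)
  also have "(\<Sum>m<g z. F m) = W b a / 2"
  proof -
    have le: "V + g a \<le> g z" using Vb_bound[of b] g_mono[of "ab b + 16" z] z1 unfolding V_def a_def by simp
    have "(\<Sum>m<g z. F m) = (\<Sum>m<(V + g a) + (g z - (V + g a)). F m)" using le by simp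
    also have "\<dots> = (\<Sum>m<V + g a. F m) + (\<Sum>r<g z - (V + g a). F (V + g a + r))" by (rule sum_split_nat)
    also have "(\<Sum>r<g z - (V + g a). F (V + g a + r)) = 0" unfolding F_def by simp
    also have "(\<Sum>m<V + g a. F m) = (\<Sum>m<V. F m) + (\<Sum>r<g a. F (V + r))" by (rule sum_split_nat)
    also have "(\<Sum>m<V. F m) = 0" unfolding F_def by simp
    also have "(\<Sum>r<g a. F (V + r)) = (\<Sum>r<g a. (1/2::real) ^ occ b r a / 2)"
    proof (rule sum.cong)
      fix r assume "r \<in> {..<g a}"
      then have "occ b (Vb b + r) z = occ b r (ab b)" using occ_shift[OF z1 z2] unfolding a_def by simp
      then show "F (V + r) = (1/2::real) ^ occ b r a / 2" unfolding F_def h_def V_def a_def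
        using \<open>r \<in> {..<g a}\<close> a_def by simp
    qed simp
    also have "\<dots> = W b a / 2" unfolding W_def by (simp add: sum_divide_distrib)
    finally show ?thesis by simp
  qed
  finally show ?thesis unfolding a_def .
qed

lemma level: "ab b - 4 \<le> z \<Longrightarrow> z \<le> ab b \<Longrightarrow> W b z \<le> th ^ b * real (g z)"
proof (induction b arbitrary: z)
  case 0 then show ?case using W0 by simp
next
  case (Suc b)
  define a where "a = ab b"
  define \<mu> where "\<mu> = th ^ b"
  have mu0: "0 \<le> \<mu>" unfolding \<mu>_def using th_pos by simp
  have abS: "ab (Suc b) = a + 20" unfolding ab_def a_def by simp
  have z1: "a + 16 \<le> z" and z2: "z \<le> a + 20" using Suc.prems abS by auto
  have H1: "\<And>z. ab b - 4 \<le> z \<Longrightarrow> z < ab b \<Longrightarrow> W b z \<le> \<mu> * real (g z)"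
    using Suc.IH unfolding \<mu>_def by simp
  have H2: "W b (ab b) \<le> \<mu> * real (g (ab b))" using Suc.IH[of "ab b"] unfolding \<mu>_def by simp
  have TG: "W b z \<le> \<mu> * (real (g z) - real (g a)) + W b a"
    using Tgen[OF H1 H2, of z] z1 unfolding a_def by simp
  have E: "W (Suc b) z = W b z - W b a / 2" using W_Suc_eq[of b z] z1 z2 unfolding a_def by simp
  have H2': "W b a \<le> \<mu> * real (g a)" using H2 unfolding a_def .
  have "W (Suc b) z \<le> \<mu> * (real (g z) - real (g a)) + \<mu> * real (g a) / 2"
    using E TG H2' by linarith
  also have "\<dots> \<le> th ^ Suc b * real (g z)"
  proof -
    have "g z \<le> g (a + 20)" using z2 by (rule g_mono)
    also have "\<dots> \<le> 2^20 * g a" by (rule g_pow)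
    finally have gz: "real (g z) \<le> 2^20 * real (g a)" by (simp add: of_nat_le_iff[symmetric])
    have "\<mu> * real (g z) / 2^21 \<le> \<mu> * real (g a) / 2"
      using mult_left_mono[OF gz mu0] by (simp add: field_simps)
    then show ?thesis unfolding th_def \<mu>_def by (simp add: algebra_simps)
  qed
  finally show ?case .
qed

lemma top_bound: "ab B \<le> z \<Longrightarrow> W B z \<le> th ^ B * real (g z)"
proof -
  assume z: "ab B \<le> z"
  have H1: "\<And>z. ab B - 4 \<le> z \<Longrightarrow> z < ab B \<Longrightarrow> W B z \<le> th ^ B * real (g z)" using level by simp
  have H2: "W B (ab B) \<le> th ^ B * real (g (ab B))" using level by simp
  have "W B z \<le> th ^ B * (real (g z) - real (g (ab B))) + W B (ab B)" using Tgen[OF H1 H2 z] .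
  then show ?thesis using H2 by (simp add: algebra_simps)
qed




definition Qg :: "nat \<Rightarrow> nat set" where "Qg b = {ab b + 5, ab b + 12, ab b + 14}"

lemma g_ident: "10 \<le> a \<Longrightarrow> g (a+15) + g (a+10) = g (a+14) + g (a+12) + g (a+5)"
proof -
  assume a: "10 \<le> a"
  have e1: "g (a+15) = g (a+14) + g (a+10)" using g5[of "a+15"] by (simp add: algebra_simps)
  have e2: "g (a+12) = g (a+10) + g (a+9)" using g3[of "a+12"] by (simp add: algebra_simps)
  have e3: "g (a+10) = g (a+9) + g (a+5)" using g5[of "a+10"] by (simp add: algebra_simps)
  show ?thesis using e1 e2 e3 by simp
qed

lemma blk_disj: "b \<noteq> b' \<Longrightarrow> blk b \<inter> blk b' = {}"
  unfolding blk_def ab_def by (cases "b < b'") (auto simp: nat_neq_iff)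

lemma gadget1:
  assumes L: "fq_legal D" and P: "D \<inter> blk b = pat b"
  shows "fq_legal ((D - pat b) \<union> Qg b)" "sum g ((D - pat b) \<union> Qg b) = sum g D"
    "card ((D - pat b) \<union> Qg b) = Suc (card D)"
    "\<And>b'. b' \<noteq> b \<Longrightarrow> ((D - pat b) \<union> Qg b) \<inter> blk b' = D \<inter> blk b'"
proof -
  define a where "a = ab b"
  have a10: "10 \<le> a" unfolding a_def by (rule ab_ge)
  have fin: "finite D" using legal_fin[OF L] .
  have patD: "pat b \<subseteq> D" using P by blast
  have Qblk: "Qg b \<subseteq> blk b" unfolding Qg_def blk_def by auto
  have patblk: "pat b \<subseteq> blk b" unfolding pat_def blk_def by auto
  have Qpat: "Qg b \<inter> pat b = {}" unfolding Qg_def pat_def by auto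
  have QD: "Qg b \<inter> (D - pat b) = {}" using P Qblk Qpat by blast
  have outside: "\<And>y. y \<in> D - pat b \<Longrightarrow> y < a \<or> a + 20 \<le> y"
  proof -
    fix y assume "y \<in> D - pat b"
    then have "y \<notin> blk b" using P by blast
    then show "y < a \<or> a + 20 \<le> y" unfolding blk_def a_def by auto
  qed
  have Qval: "\<And>x. x \<in> Qg b \<Longrightarrow> a + 5 \<le> x \<and> x \<le> a + 14" unfolding Qg_def a_def by auto
  show "fq_legal ((D - pat b) \<union> Qg b)"
  proof (rule legalI)
    show "finite (D - pat b \<union> Qg b)" using fin unfolding Qg_def by simp
    show "0 \<notin> D - pat b \<union> Qg b" using L Qval a10 unfolding fq_legal_def by fastforce
    show "\<not> {1, 3} \<subseteq> D - pat b \<union> Qg b"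
    proof
      assume "{1, 3} \<subseteq> D - pat b \<union> Qg b"
      moreover have "1 \<notin> Qg b" "3 \<notin> Qg b" using Qval a10 by fastforce+
      ultimately have "{1, 3} \<subseteq> D" by blast
      then show False using L unfolding fq_legal_def by blast
    qed
    fix i j assume ij: "i \<in> D - pat b \<union> Qg b" "j \<in> D - pat b \<union> Qg b" "i < j"
    show "j - i \<noteq> 1 \<and> j - i \<noteq> 3 \<and> j - i \<noteq> 4"
    proof (cases "i \<in> Qg b")
      case iQ: True
      show ?thesis
      proof (cases "j \<in> Qg b")
        case True
        then show ?thesis using iQ ij(3) unfolding Qg_def by auto
      next
        case False
        then have "j \<in> D - pat b" using ij by blast
        then have "j < a \<or> a + 20 \<le> j" by (rule outside)
        then show ?thesis using Qval[OF iQ] ij(3) by auto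
      qed
    next
      case iN: False
      then have iD: "i \<in> D - pat b" using ij by blast
      show ?thesis
      proof (cases "j \<in> Qg b")
        case True
        have "i < a \<or> a + 20 \<le> i" using iD by (rule outside)
        then show ?thesis using Qval[OF True] ij(3) by auto
      next
        case False
        then have "j \<in> D" using ij by blast
        then show ?thesis using legalD[OF L _ _ ij(3)] iD by blast
      qed
    qed
  qed
  have sQ: "sum g (Qg b) = g (a+14) + g (a+12) + g (a+5)" unfolding Qg_def a_def by simp
  have sP: "sum g (pat b) = g (a+15) + g (a+10)" unfolding pat_def a_def by simp
  have "sum g ((D - pat b) \<union> Qg b) = sum g (D - pat b) + sum g (Qg b)"
    using fin QD by (intro sum.union_disjoint) (auto simp: Qg_def)
  moreover have "sum g D = sum g (D - pat b) + sum g (pat b)"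
    using fin patD by (metis add.commute sum.subset_diff)
  ultimately show "sum g ((D - pat b) \<union> Qg b) = sum g D" using sQ sP g_ident[OF a10] by simp
  have cQ: "card (Qg b) = 3" unfolding Qg_def by simp
  have cP: "card (pat b) = 2" unfolding pat_def by simp
  have "card ((D - pat b) \<union> Qg b) = card (D - pat b) + card (Qg b)"
    using fin QD by (intro card_Un_disjoint) (auto simp: Qg_def)
  moreover have "card (D - pat b) = card D - card (pat b)" by (rule card_Diff_subset[OF _ patD]) (simp add: pat_def)
  moreover have "card D \<ge> 2" using card_mono[OF fin patD] cP by simp
  ultimately show "card ((D - pat b) \<union> Qg b) = Suc (card D)" using cQ cP by simp
  fix b' assume "b' \<noteq> b"
  then have "blk b \<inter> blk b' = {}" by (intro blk_disj) simp
  then show "((D - pat b) \<union> Qg b) \<inter> blk b' = D \<inter> blk b'" using Qblk patblk by blast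
qed

lemma gadgets:
  assumes "finite M"
  shows "fq_legal D \<Longrightarrow> (\<forall>b\<in>M. D \<inter> blk b = pat b) \<Longrightarrow>
    \<exists>D'. fq_legal D' \<and> sum g D' = sum g D \<and> card D' = card D + card M \<and> (\<forall>b. b \<notin> M \<longrightarrow> D' \<inter> blk b = D \<inter> blk b)"
  using assms
proof (induction M rule: finite_induct)
  case empty then show ?case by (intro exI[of _ D]) simp
next
  case (insert b M)
  obtain D1 where D1: "fq_legal D1" "sum g D1 = sum g D" "card D1 = card D + card M"
    "\<forall>b'. b' \<notin> M \<longrightarrow> D1 \<inter> blk b' = D \<inter> blk b'"
    using insert by auto
  have P: "D1 \<inter> blk b = pat b" using D1(4) insert by auto
  note G = gadget1[OF D1(1) P]
  show ?case
  proof (intro exI[of _ "(D1 - pat b) \<union> Qg b"] conjI allI impI)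
    show "fq_legal (D1 - pat b \<union> Qg b)" by (rule G(1))
    show "sum g (D1 - pat b \<union> Qg b) = sum g D" using G(2) D1(2) by simp
    show "card (D1 - pat b \<union> Qg b) = card D + card (insert b M)" using G(3) D1(3) insert by simp
    fix b' assume "b' \<notin> insert b M"
    then show "(D1 - pat b \<union> Qg b) \<inter> blk b' = D \<inter> blk b'" using G(4)[of b'] D1(4) by auto
  qed
qed

lemma decomp:
  assumes n: "10 \<le> n" and m: "m < g (Suc n)"
  shows "\<exists>D. fq_legal D \<and> sum g D = m \<and> (\<forall>b. D \<inter> blk b = GG m (Suc n) \<inter> blk b)"
proof -
  obtain G r w where e: "grd m (Suc n) = (G, r, w)" by (metis prod_cases3)
  have I: "sum g G + r = m \<and> r < g w \<and> G \<subseteq> {10..<Suc n} \<and> 6 \<le> w \<and> w \<le> 10 \<and> w \<le> Suc n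
     \<and> (\<forall>x\<in>G. w + 4 \<le> x) \<and> (\<forall>x\<in>G. \<forall>y\<in>G. x < y \<longrightarrow> x + 5 \<le> y) \<and> finite G"
    using grd_inv[OF m] n e by simp
  have GG: "GG m (Suc n) = G" unfolding GG_def e by simp
  have rw: "r < g (Suc (w-1))" using I by simp
  obtain L where L: "L \<subseteq> {1..w-1}" "fq_legal L" "sum g L = r" using rep_all[OF rw] by blast
  have Gge: "\<And>x. x \<in> G \<Longrightarrow> w + 4 \<le> x" using I by blast
  have Gge10: "\<And>x. x \<in> G \<Longrightarrow> 10 \<le> x" using I by auto
  have Lle: "\<And>x. x \<in> L \<Longrightarrow> x \<le> w - 1 \<and> 1 \<le> x" using L(1) by auto
  have Ggap: "\<And>x y. x \<in> G \<Longrightarrow> y \<in> G \<Longrightarrow> x < y \<Longrightarrow> x + 5 \<le> y" using I by blast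
  have finG: "finite G" using I by blast
  have w6: "6 \<le> w" "w \<le> 10" using I by auto
  have disj: "G \<inter> L = {}" using Gge Lle w6 by fastforce
  show ?thesis
  proof (intro exI[of _ "G \<union> L"] conjI allI)
    show "fq_legal (G \<union> L)"
    proof (rule legalI)
      show "finite (G \<union> L)" using finG legal_fin[OF L(2)] by simp
      show "0 \<notin> G \<union> L" using Gge10 Lle by fastforce
      show "\<not> {1, 3} \<subseteq> G \<union> L"
      proof
        assume "{1, 3} \<subseteq> G \<union> L"
        moreover have "1 \<notin> G" "3 \<notin> G" using Gge10 by fastforce+
        ultimately have "{1, 3} \<subseteq> L" by blast
        then show False using L(2) unfolding fq_legal_def by blast
      qed
      fix i j assume ij: "i \<in> G \<union> L" "j \<in> G \<union> L" "i < j"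
      show "j - i \<noteq> 1 \<and> j - i \<noteq> 3 \<and> j - i \<noteq> 4"
      proof (cases "i \<in> G")
        case True
        show ?thesis
        proof (cases "j \<in> G")
          case True2: True
          then show ?thesis using Ggap[OF True True2 ij(3)] by auto
        next
          case False
          then have "j \<in> L" using ij by blast
          then show ?thesis using Lle[of j] Gge[OF True] ij(3) w6 by auto
        qed
      next
        case False
        then have iL: "i \<in> L" using ij by blast
        show ?thesis
        proof (cases "j \<in> G")
          case True
          then show ?thesis using Lle[OF iL] Gge[OF True] w6 by auto
        next
          case False
          then have "j \<in> L" using ij by blast
          then show ?thesis using legalD[OF L(2) iL _ ij(3)] by blast
        qed
      qed
    qed
    have "sum g G + r = m" using I by blast
    then show "sum g (G \<union> L) = m" using sum.union_disjoint[OF finG legal_fin[OF L(2)] disj, of g] L(3) by simp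
    fix b
    have "L \<inter> blk b = {}" using Lle ab_ge[of b] w6 unfolding blk_def by fastforce
    then show "(G \<union> L) \<inter> blk b = GG m (Suc n) \<inter> blk b" unfolding GG by blast
  qed
qed

lemma decomps_eq: "fq_decomps m = {S. fq_legal S \<and> sum g S = m}"
proof -
  have "\<And>S. fq_legal S \<Longrightarrow> (\<Sum>i\<in>S. fq i) = sum g S"
  proof -
    fix S assume "fq_legal S"
    then have "0 \<notin> S" unfolding fq_legal_def by blast
    show "(\<Sum>i\<in>S. fq i) = sum g S"
    proof (rule sum.cong)
      fix x assume "x \<in> S" then have "x \<ge> 1" using \<open>0 \<notin> S\<close> by (cases x) auto
      then show "fq x = g x" by (rule fq_eq)
    qed simp
  qed
  then show ?thesis unfolding fq_decomps_def by auto
qed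

lemma decomps_fin: "finite (fq_decomps m)"
proof -
  have "fq_decomps m \<subseteq> Pow {1..m}"
  proof
    fix S assume "S \<in> fq_decomps m"
    then have S: "fq_legal S" "sum g S = m" using decomps_eq by auto
    have "\<And>i. i \<in> S \<Longrightarrow> i \<in> {1..m}"
    proof -
      fix i assume i: "i \<in> S"
      have "i \<le> g i" by (rule g_ge)
      also have "g i \<le> sum g S" using i legal_fin[OF S(1)] by (intro member_le_sum) auto
      finally have "i \<le> m" using S(2) by simp
      moreover have "0 \<notin> S" using S(1) unfolding fq_legal_def by blast
      ultimately show "i \<in> {1..m}" using i by (cases i) auto
    qed
    then show "S \<in> Pow {1..m}" by blast
  qed
  then show ?thesis by (rule finite_subset) simp
qed

lemma occ_le_diff:
  assumes n: "10 \<le> n" and m: "m < g (Suc n)"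
  shows "real (occ B m (Suc n)) \<le> real (kmax m) - real (kmin m)"
proof -
  obtain D where D: "fq_legal D" "sum g D = m" "\<forall>b. D \<inter> blk b = GG m (Suc n) \<inter> blk b"
    using decomp[OF n m] by blast
  define M where "M = {b \<in> {..<B}. GG m (Suc n) \<inter> blk b = pat b}"
  have finM: "finite M" unfolding M_def by simp
  have "\<forall>b\<in>M. D \<inter> blk b = pat b" using D(3) unfolding M_def by auto
  then obtain D' where D': "fq_legal D'" "sum g D' = sum g D" "card D' = card D + card M"
    using gadgets[OF finM D(1)] by blast
  have inD: "D \<in> fq_decomps m" using D decomps_eq by auto
  have inD': "D' \<in> fq_decomps m" using D' D decomps_eq by auto
  have fin: "finite (card ` fq_decomps m)" using decomps_fin by simp
  have "card D' \<le> kmax m" unfolding kmax_def using fin inD' by (intro Max_ge) auto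
  moreover have "kmin m \<le> card D" unfolding kmin_def using fin inD by (intro Min_le) auto
  moreover have "occ B m (Suc n) = card M" unfolding occ_def M_def by simp
  ultimately show ?thesis using D'(3) by simp
qed




definition eb :: "nat \<Rightarrow> real" where
  "eb n = 32 * th powr ((real n - 29)/20) * 2 powr (ln (real n))"

lemma eb_lim: "(eb \<longlongrightarrow> 0) sequentially"
  unfolding eb_def th_def by real_asymp

lemma main_bound:
  assumes n: "30 \<le> n"
  shows "1 - eb n \<le> real (card {m \<in> {fq n..<fq (Suc n)}. real (kmax m) - real (kmin m) \<ge> 1 * ln (real n)})
           / real (fq (Suc n) - fq n)"
    and "real (card {m \<in> {fq n..<fq (Suc n)}. real (kmax m) - real (kmin m) \<ge> 1 * ln (real n)})
           / real (fq (Suc n) - fq n) \<le> 1"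
proof -
  have fqn: "fq n = g n" "fq (Suc n) = g (Suc n)" using n by (simp_all add: fq_eq)
  define A where "A = {g n..<g (Suc n)}"
  define Good where "Good = {m \<in> A. real (kmax m) - real (kmin m) \<ge> 1 * ln (real n)}"
  define Bad where "Bad = A - Good"
  define T where "T = g (Suc n) - g n"
  have g51: "g (Suc n) = g n + g (n-4)" using g5[of "Suc n"] n by simp
  have T4: "T = g (n-4)" unfolding T_def using g51 by simp
  have Tpos: "0 < T" using T4 g_pos[of "n-4"] by simp
  have cA: "card A = T" unfolding A_def T_def by simp
  have finA: "finite A" unfolding A_def by simp
  have GA: "Good \<subseteq> A" unfolding Good_def by auto
  have cGB: "card Good + card Bad = T"
    unfolding Bad_def using card_Diff_subset[OF finite_subset[OF GA finA] GA] card_mono[OF finA GA] cA by simp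
  define B where "B = (n - 9) div 20"
  have abB: "ab B \<le> Suc n" unfolding ab_def B_def using n by simp
  have n1: "1 \<le> real n" using n by simp
  have lnpos: "0 \<le> ln (real n)" using n1 by simp
  define p where "p = 2 powr (ln (real n))"
  have ppos: "0 < p" unfolding p_def by simp
  have badw: "\<And>m. m \<in> Bad \<Longrightarrow> 1 / p \<le> (1/2::real) ^ occ B m (Suc n)"
  proof -
    fix m assume "m \<in> Bad"
    then have mA: "m \<in> A" and ng: "\<not> real (kmax m) - real (kmin m) \<ge> 1 * ln (real n)"
      unfolding Bad_def Good_def by auto
    have "m < g (Suc n)" using mA unfolding A_def by simp
    then have "real (occ B m (Suc n)) \<le> real (kmax m) - real (kmin m)"
      using occ_le_diff[of n m B] n by simp
    then have le: "real (occ B m (Suc n)) \<le> ln (real n)" using ng by simp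
    have "2 ^ occ B m (Suc n) = 2 powr real (occ B m (Suc n))" by (simp add: powr_realpow)
    also have "\<dots> \<le> p" unfolding p_def using le by (intro powr_mono) auto
    finally have "(2::real) ^ occ B m (Suc n) \<le> p" .
    then show "1 / p \<le> (1/2::real) ^ occ B m (Suc n)"
      by (simp add: power_one_over divide_simps ppos)
  qed
  have finBad: "finite Bad" unfolding Bad_def using finA by simp
  have "real (card Bad) / p = (\<Sum>m\<in>Bad. 1 / p)" by simp
  also have "\<dots> \<le> (\<Sum>m\<in>Bad. (1/2::real) ^ occ B m (Suc n))" by (rule sum_mono) (rule badw)
  also have "\<dots> \<le> (\<Sum>m<g (Suc n). (1/2::real) ^ occ B m (Suc n))"
  proof (rule sum_mono2)
    show "Bad \<subseteq> {..<g (Suc n)}" unfolding Bad_def A_def by auto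
  qed auto
  also have "\<dots> = W B (Suc n)" unfolding W_def ..
  also have "\<dots> \<le> th ^ B * real (g (Suc n))" by (rule top_bound[OF abB])
  finally have b1: "real (card Bad) / p \<le> th ^ B * real (g (Suc n))" .
  have thB: "th ^ B \<le> th powr ((real n - 29)/20)"
  proof -
    have thp: "0 < th" unfolding th_def by simp
    have "th ^ B = th powr real B" using thp by (simp add: powr_realpow)
    also have "\<dots> \<le> th powr ((real n - 29)/20)"
    proof (rule powr_mono')
      have "n - 9 \<le> 20 * B + 19" unfolding B_def by simp
      then have "real n - 28 \<le> 20 * real B" using n by linarith
      then show "(real n - 29)/20 \<le> real B" by simp
    qed (use th_pos in auto)
    finally show ?thesis .
  qed
  have gT: "real (g (Suc n)) \<le> 32 * real T"
  proof -
    have "g (Suc n) = g ((n-4) + 5)" using n by simp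
    also have "\<dots> \<le> 2^5 * g (n-4)" by (rule g_pow)
    finally show ?thesis unfolding T4 by simp
  qed
  have "real (card Bad) \<le> th ^ B * real (g (Suc n)) * p" using b1 ppos by (simp add: divide_simps)
  also have "\<dots> \<le> th powr ((real n - 29)/20) * (32 * real T) * p"
    using thB gT ppos th_pos by (intro mult_right_mono mult_mono) auto
  also have "\<dots> = eb n * real T" unfolding eb_def p_def by simp
  finally have bad: "real (card Bad) \<le> eb n * real T" .
  have eqq: "{m \<in> {fq n..<fq (Suc n)}. real (kmax m) - real (kmin m) \<ge> 1 * ln (real n)} = Good"
    unfolding Good_def A_def fqn by simp
  have fT: "real (fq (Suc n) - fq n) = real T" unfolding T_def fqn by simp
  show "1 - eb n \<le> real (card {m \<in> {fq n..<fq (Suc n)}. real (kmax m) - real (kmin m) \<ge> 1 * ln (real n)})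
           / real (fq (Suc n) - fq n)"
    unfolding eqq fT using bad cGB Tpos by (simp add: field_simps)
  show "real (card {m \<in> {fq n..<fq (Suc n)}. real (kmax m) - real (kmin m) \<ge> 1 * ln (real n)})
           / real (fq (Suc n) - fq n) \<le> 1"
    unfolding eqq fT using cGB Tpos by (simp add: field_simps)
qed

theorem theorem1p19:
  shows "\<exists>C::real. C > 0 \<and>
    ((\<lambda>n. real (card {m \<in> {fq n..<fq (Suc n)}.
              real (kmax m) - real (kmin m) \<ge> C * ln (real n)})
           / real (fq (Suc n) - fq n)) \<longlongrightarrow> 1) sequentially"
proof (intro exI[of _ 1] conjI)
  show "(1::real) > 0" by simp
  have l1: "((\<lambda>n. 1 - eb n) \<longlongrightarrow> 1 - 0) sequentially" by (intro tendsto_intros eb_lim)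
  show "((\<lambda>n. real (card {m \<in> {fq n..<fq (Suc n)}.
              real (kmax m) - real (kmin m) \<ge> 1 * ln (real n)})
           / real (fq (Suc n) - fq n)) \<longlongrightarrow> 1) sequentially"
  proof (rule tendsto_sandwich[OF _ _ l1[simplified] tendsto_const])
    show "\<forall>\<^sub>F n in sequentially. 1 - eb n \<le> real (card {m \<in> {fq n..<fq (Suc n)}.
              real (kmax m) - real (kmin m) \<ge> 1 * ln (real n)}) / real (fq (Suc n) - fq n)"
      by (rule eventually_mono[OF eventually_ge_at_top[of "30::nat"]], rule main_bound(1))
    show "\<forall>\<^sub>F n in sequentially. real (card {m \<in> {fq n..<fq (Suc n)}.
              real (kmax m) - real (kmin m) \<ge> 1 * ln (real n)}) / real (fq (Suc n) - fq n) \<le> 1"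
      by (rule eventually_mono[OF eventually_ge_at_top[of "30::nat"]], rule main_bound(2))
  qed
qed



end
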